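(* Let $n\ge k\ge1$ be integers, $i\in\{1,\ldots,n\}$, and let $H\sim\text{Hyp}(n,i,k)$ and $X\sim\text{Bin}(k, \frac{i}{n})$. Let $H^{\ast}$ denote the random variable $H$ conditioned on the event $\{H\ge ik/n\}$, and $X^{\ast}$ the random variable $X$ conditioned on the event $\{X\ge ik/n\}$. Then $H^{\ast}\le_{st} X^{\ast}$. In particular, \[ \mathbb{E}(H\mid H\ge \mathbb{E}(H)) \le \mathbb{E}(X\mid X\ge \mathbb{E}(X) ). \]
   Context: $\text{Hyp}(n,i,k)$ denotes the hypergeometric distribution: the number of black marbles in a sample without replacement of size $k$ from an urn with $i$ black and $n-i$ white marbles, i.e. $\mathbb{P}(H=j)=\binom{i}{j}\binom{n-i}{k-j}/\binom{n}{k}$, with mean $ik/n$. $\text{Bin}(k,p)$ is the binomial distribution. For random variables $U,V$, $U\le_{st}V$ (usual stochastic order) means $\mathbb{P}(U\ge t)\le\mathbb{P}(V\ge t)$ for all $t\in\mathbb{R}$. *)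

theory Defs
  imports "HOL-Probability.Probability"
begin

definition hyp_pmf :: "nat \<Rightarrow> nat \<Rightarrow> nat \<Rightarrow> nat pmf" where
  "hyp_pmf n i k = map_pmf (\<lambda>S. card (S \<inter> {..<i}))
       (pmf_of_set {S. S \<subseteq> {..<n} \<and> card S = k})"

definition st_le :: "nat pmf \<Rightarrow> nat pmf \<Rightarrow> bool" where
  "st_le U V \<longleftrightarrow> (\<forall>t::real. measure_pmf.prob U {x. real x \<ge> t} \<le> measure_pmf.prob V {x. real x \<ge> t})"

end

theory Submission
  imports Defs
begin


lemma hyp_count:
  fixes n i k j :: nat
  assumes "j \<le> k" "i \<le> n"
  shows "card {S. S \<subseteq> {..<n} \<and> card S = k \<and> card (S \<inter> {..<i}) = j}
         = (i choose j) * ((n-i) choose (k-j))"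
proof -
  let ?B = "{..<i}" and ?W = "{i..<n}"
  let ?P = "{P. P \<subseteq> ?B \<and> card P = j} \<times> {Q. Q \<subseteq> ?W \<and> card Q = k - j}"
  let ?T = "{S. S \<subseteq> {..<n} \<and> card S = k \<and> card (S \<inter> {..<i}) = j}"
  have inj: "inj_on (\<lambda>(P,Q). P \<union> Q) ?P"
  proof (rule inj_onI, clarsimp)
    fix P Q P' Q' assume "P \<subseteq> ?B" "Q \<subseteq> ?W" "P' \<subseteq> ?B" "Q' \<subseteq> ?W" "P \<union> Q = P' \<union> Q'"
    then have "P = (P \<union> Q) \<inter> ?B" "Q = (P \<union> Q) \<inter> ?W" "P' = (P' \<union> Q') \<inter> ?B" "Q' = (P' \<union> Q') \<inter> ?W" by auto
    then show "P = P' \<and> Q = Q'" using \<open>P \<union> Q = P' \<union> Q'\<close> by metis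
  qed
  have img: "(\<lambda>(P,Q). P \<union> Q) ` ?P = ?T"
  proof (rule set_eqI, rule iffI)
    fix S assume "S \<in> (\<lambda>(P,Q). P \<union> Q) ` ?P"
    then obtain P Q where PQ: "S = P \<union> Q" "P \<subseteq> ?B" "card P = j" "Q \<subseteq> ?W" "card Q = k - j" by auto
    have fin: "finite P" "finite Q" using PQ finite_subset by auto
    have disj: "P \<inter> Q = {}" using PQ(2,4) by fastforce
    have "S \<inter> ?B = P" using PQ by auto
    moreover have "card S = k" using PQ assms card_Un_disjoint[OF fin disj] by simp
    moreover have "S \<subseteq> {..<n}" using PQ assms by auto
    ultimately show "S \<in> ?T" using PQ by auto
  next
    fix S assume S: "S \<in> ?T"
    have fin: "finite S" using S finite_subset by auto
    have eq: "S = (S \<inter> ?B) \<union> (S \<inter> ?W)" using S by auto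
    have "card S = card (S \<inter> ?B) + card (S \<inter> ?W)"
      by (subst eq, rule card_Un_disjoint) (use fin in auto)
    then have "card (S \<inter> ?W) = k - j" using S by auto
    then have "(S \<inter> ?B, S \<inter> ?W) \<in> ?P" using S by auto
    moreover have "S = (\<lambda>(P,Q). P \<union> Q) (S \<inter> ?B, S \<inter> ?W)" using eq by simp
    ultimately show "S \<in> (\<lambda>(P,Q). P \<union> Q) ` ?P" by (rule rev_image_eqI)
  qed
  have "card ?T = card ?P" using card_image[OF inj] img by simp
  also have "\<dots> = (i choose j) * ((n-i) choose (k-j))"
    by (simp add: card_cartesian_product n_subsets)
  finally show ?thesis .
qed

lemma pmf_hyp:
  fixes n i k j :: nat
  assumes "i \<le> n" "k \<le> n"
  shows "pmf (hyp_pmf n i k) j = (if j \<le> k then real ((i choose j) * ((n-i) choose (k-j))) / real (n choose k) else 0)"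
proof -
  let ?U = "{S. S \<subseteq> {..<n} \<and> card S = k}"
  let ?f = "\<lambda>S. card (S \<inter> {..<i})"
  have fin: "finite ?U" by (rule finite_subset[of _ "Pow {..<n}"]) auto
  have "{..<k} \<in> ?U" using assms by auto
  then have ne: "?U \<noteq> {}" by blast
  have cardU: "card ?U = n choose k" using n_subsets[of "{..<n}" k] by simp
  have eq: "?U \<inter> ?f -` {j} = {S. S \<subseteq> {..<n} \<and> card S = k \<and> card (S \<inter> {..<i}) = j}" by auto
  have p: "pmf (hyp_pmf n i k) j = card {S. S \<subseteq> {..<n} \<and> card S = k \<and> card (S \<inter> {..<i}) = j} / card ?U"
    unfolding hyp_pmf_def pmf_map using fin ne eq by (simp add: measure_pmf_of_set)
  show ?thesis
  proof (cases "j \<le> k")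
    case True
    then show ?thesis using p hyp_count[OF True assms(1)] cardU by simp
  next
    case False
    have "{S. S \<subseteq> {..<n} \<and> card S = k \<and> card (S \<inter> {..<i}) = j} = {}"
    proof (rule ccontr)
      assume "\<not> ?thesis"
      then obtain S where S: "S \<subseteq> {..<n}" "card S = k" "card (S \<inter> {..<i}) = j" by blast
      have "finite S" using S(1) finite_subset by blast
      then have "card (S \<inter> {..<i}) \<le> card S" by (intro card_mono) auto
      then show False using S False by simp
    qed
    then show ?thesis using p False by simp
  qed
qed

lemma choose_step: "(n choose Suc k) * Suc k = (n choose k) * (n - k)"
proof (cases n)
  case 0 then show ?thesis by simp
next
  case (Suc m)
  have "Suc m * (m choose k) = (Suc m choose Suc k) * Suc k" by (rule Suc_times_binomial_eq)
  moreover have "(Suc m - k) * (Suc m choose k) = Suc m * ((Suc m - 1) choose k)" by (rule binomial_absorb_comp)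
  ultimately show ?thesis using Suc by (simp add: mult.commute)
qed

lemma kernel:
  fixes h b phi :: "nat \<Rightarrow> real"
  assumes fin: "finite A"
    and lr: "\<And>l j. l \<in> A \<Longrightarrow> j \<in> A \<Longrightarrow> l \<le> j \<Longrightarrow> h j * b l \<le> b j * h l"
    and mono: "\<And>x y. x \<le> y \<Longrightarrow> phi x \<le> phi y"
  shows "(\<Sum>j\<in>A. phi j * h j) * (\<Sum>l\<in>A. b l) \<le> (\<Sum>j\<in>A. phi j * b j) * (\<Sum>l\<in>A. h l)"
proof -
  define K where "K j l = h j * b l - b j * h l" for j l
  define S where "S = (\<Sum>j\<in>A. \<Sum>l\<in>A. phi j * K j l)"
  have S1: "(\<Sum>j\<in>A. phi j * h j) * (\<Sum>l\<in>A. b l) - (\<Sum>j\<in>A. phi j * b j) * (\<Sum>l\<in>A. h l) = S"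
  proof -
    have "(\<Sum>j\<in>A. phi j * h j) * (\<Sum>l\<in>A. b l) - (\<Sum>j\<in>A. phi j * b j) * (\<Sum>l\<in>A. h l)
       = (\<Sum>j\<in>A. \<Sum>l\<in>A. phi j * h j * b l - phi j * b j * h l)"
      by (simp add: sum_product sum_subtractf[symmetric])
    also have "\<dots> = S" unfolding S_def K_def by (simp add: algebra_simps)
    finally show ?thesis .
  qed
  have "S = (\<Sum>l\<in>A. \<Sum>j\<in>A. phi j * K j l)" unfolding S_def by (rule sum.swap)
  also have "\<dots> = - (\<Sum>l\<in>A. \<Sum>j\<in>A. phi j * K l j)"
    by (simp add: K_def sum_negf[symmetric] algebra_simps)
  finally have S2: "S = - (\<Sum>j\<in>A. \<Sum>l\<in>A. phi l * K j l)" by simp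
  have "2 * S = S - (\<Sum>j\<in>A. \<Sum>l\<in>A. phi l * K j l)" using S2 by simp
  also have "\<dots> = (\<Sum>j\<in>A. \<Sum>l\<in>A. (phi j - phi l) * K j l)"
    unfolding S_def by (simp add: sum_subtractf left_diff_distrib)
  also have "\<dots> \<le> 0"
  proof (intro sum_nonpos)
    fix j l assume jl: "j \<in> A" "l \<in> A"
    show "(phi j - phi l) * K j l \<le> 0"
    proof (cases "l \<le> j")
      case True
      then show ?thesis using lr[OF jl(2,1) True] mono[OF True] unfolding K_def
        by (simp add: mult_nonneg_nonpos)
    next
      case False
      then have "j \<le> l" by simp
      have "phi j - phi l \<le> 0" using mono[OF \<open>j \<le> l\<close>] by simp
      moreover have "K j l \<ge> 0" using lr[OF jl(1,2) \<open>j \<le> l\<close>] unfolding K_def by (simp add: mult.commute)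
      ultimately show ?thesis by (rule mult_nonpos_nonneg)
    qed
  qed
  finally show ?thesis using S1 by simp
qed

lemma lr_step:
  fixes n i k j :: nat
  assumes ass: "i*k \<le> j*n" "Suc j \<le> k" "i \<le> n" "0 < n"
  defines "p \<equiv> real i / real n" and "q \<equiv> 1 - real i / real n"
  shows "real ((i choose Suc j) * ((n-i) choose (k - Suc j))) * (real (k choose j) * p^j * q^(k-j))
      \<le> real ((i choose j) * ((n-i) choose (k-j))) * (real (k choose Suc j) * p^(Suc j) * q^(k - Suc j))"
proof -
  define r where "r = k - Suc j"
  define N where "N = n - i"
  have kj: "k - j = Suc r" using ass unfolding r_def by simp
  define A where "A = real (i choose j)"
  define A1 where "A1 = real (i choose Suc j)"
  define B where "B = real (N choose r)"
  define B1 where "B1 = real (N choose Suc r)"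
  define K where "K = real (k choose j)"
  define K1 where "K1 = real (k choose Suc j)"
  have a1: "A1 * real (Suc j) = A * real (i - j)"
    unfolding A_def A1_def using choose_step[of i j] by (metis of_nat_mult)
  have a2: "B1 * real (Suc r) = B * real (N - r)"
    unfolding B_def B1_def using choose_step[of N r] by (metis of_nat_mult)
  have a3: "K1 * real (Suc j) = K * real (Suc r)"
    unfolding K_def K1_def using choose_step[of k j] kj by (metis of_nat_mult)
  have p0: "p \<ge> 0" unfolding p_def by simp
  have q0: "q \<ge> 0" unfolding q_def using ass by simp
  have A0: "A \<ge> 0" "B \<ge> 0" "K \<ge> 0" unfolding A_def B_def K_def by simp_all
  have goal: "A1 * B * (K * p^j * q^(Suc r)) \<le> A * B1 * (K1 * p^(Suc j) * q^r)"
  proof (cases "B = 0")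
    case True
    then show ?thesis using A0 p0 q0 unfolding A_def B1_def K1_def by simp
  next
    case False
    then have rN: "r \<le> N" unfolding B_def by simp
    define F where "F = A * B * K * real (Suc r) * p^j * q^r"
    have F0: "F \<ge> 0" unfolding F_def using A0 p0 q0 by simp
    have key: "real (i - j) * q \<le> real (N - r) * p"
    proof (cases "j \<le> i")
      case False
      then show ?thesis using p0 by simp
    next
      case True
      have e1: "real (i - j) = real i - real j" using True by simp
      have e2: "real (N - r) = real N - real r" using rN by simp
      have e3: "real N = real n - real i" unfolding N_def using ass by simp
      have e4: "real r = real k - real j - 1" unfolding r_def using ass by simp
      have ik: "real i * real k \<le> real j * real n" using ass(1) by (metis of_nat_le_iff of_nat_mult)
      have "(real i - real j) * (real n - real i) \<le> (real n - real i - (real k - real j - 1)) * real i"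
        using ik by (simp add: algebra_simps)
      then have "(real i - real j) * (real n - real i) / real n \<le> (real n - real i - (real k - real j - 1)) * real i / real n"
        using ass(4) by (simp add: divide_right_mono)
      then show ?thesis unfolding e1 e2 e3 e4 p_def q_def using ass(4)
        by (simp add: field_simps)
    qed
    have L: "A1 * B * (K * p^j * q^(Suc r)) * real (Suc j * Suc r) = F * (real (i - j) * q)"
    proof -
      have "A1 * B * (K * p^j * q^(Suc r)) * real (Suc j * Suc r) = (A1 * real (Suc j)) * B * K * real (Suc r) * p^j * q^r * q"
        by (simp add: algebra_simps)
      also have "\<dots> = F * (real (i - j) * q)" unfolding a1 F_def by (simp add: algebra_simps)
      finally show ?thesis .
    qed
    have R: "A * B1 * (K1 * p^(Suc j) * q^r) * real (Suc j * Suc r) = F * (real (N - r) * p)"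
    proof -
      have "A * B1 * (K1 * p^(Suc j) * q^r) * real (Suc j * Suc r) = A * (B1 * real (Suc r)) * (K1 * real (Suc j)) * p^j * q^r * p"
        by (simp add: algebra_simps)
      also have "\<dots> = F * (real (N - r) * p)" unfolding a2 a3 F_def by (simp add: algebra_simps)
      finally show ?thesis .
    qed
    have "F * (real (i - j) * q) \<le> F * (real (N - r) * p)" using key F0 by (rule mult_left_mono)
    then have "A1 * B * (K * p^j * q^(Suc r)) * real (Suc j * Suc r) \<le> A * B1 * (K1 * p^(Suc j) * q^r) * real (Suc j * Suc r)"
      by (simp only: L R)
    moreover have "real (Suc j * Suc r) > 0" by (simp only: of_nat_0_less_iff) simp
    ultimately show ?thesis by (rule mult_right_le_imp_le)
  qed
  show ?thesis using goal unfolding A_def A1_def B_def B1_def K_def K1_def N_def kj r_def[symmetric]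
    by (simp add: algebra_simps)
qed

lemma lr_pair:
  fixes n i k l j :: nat
  assumes ass: "1 \<le> i" "i \<le> n" "k \<le> n" "i*k \<le> l*n" "l \<le> j"
  shows "pmf (hyp_pmf n i k) j * pmf (binomial_pmf k (real i / real n)) l
       \<le> pmf (binomial_pmf k (real i / real n)) j * pmf (hyp_pmf n i k) l"
proof -
  define p where "p = real i / real n"
  define h where "h = pmf (hyp_pmf n i k)"
  define b where "b = pmf (binomial_pmf k p)"
  have n0: "0 < n" using ass by simp
  have p01: "0 \<le> p" "p \<le> 1" unfolding p_def using ass by auto
  have bdef: "b x = real (k choose x) * p^x * (1-p)^(k-x)" for x
    unfolding b_def using p01 by simp
  have hdef: "h x = (if x \<le> k then real ((i choose x) * ((n-i) choose (k-x))) / real (n choose k) else 0)" for x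
    unfolding h_def using pmf_hyp[OF ass(2,3)] by simp
  have h0: "h x \<ge> 0" for x unfolding h_def by simp
  have b0: "b x \<ge> 0" for x unfolding b_def by simp
  have "h j * b l \<le> b j * h l"
  proof (cases "i = n")
    case True
    then have p1: "p = 1" unfolding p_def using n0 by simp
    show ?thesis
    proof (cases "l = j")
      case True then show ?thesis by (simp add: mult.commute)
    next
      case False
      then have lj: "l < j" using ass by simp
      show ?thesis
      proof (cases "j \<le> k")
        case True
        then have "b l = 0" using lj unfolding bdef p1 by simp
        then show ?thesis using b0 h0 by simp
      next
        case False
        then have "h j = 0" unfolding hdef by simp
        then show ?thesis using b0 h0 by simp
      qed
    qed
  next
    case False
    then have p0: "0 < p" "p < 1" unfolding p_def using ass n0 by auto
    have bpos: "x \<le> k \<Longrightarrow> b x > 0" for x unfolding bdef using p0 by simp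
    from ass(5) show ?thesis
    proof (induction j rule: dec_induct)
      case base then show ?case by (simp add: mult.commute)
    next
      case (step j)
      show ?case
      proof (cases "Suc j \<le> k")
        case False
        then have "h (Suc j) = 0" unfolding hdef by simp
        then show ?thesis using b0 h0 by simp
      next
        case True
        have ijn: "i * k \<le> j * n" using ass(4) step(1) by (meson le_trans mult_le_mono1)
        have st: "h (Suc j) * b j \<le> b (Suc j) * h j"
        proof -
          have c0: "real (n choose k) > 0" using ass by simp
          have "real ((i choose Suc j) * ((n-i) choose (k - Suc j))) * b j
              \<le> real ((i choose j) * ((n-i) choose (k-j))) * b (Suc j)"
            unfolding bdef p_def using lr_step[OF ijn True ass(2) n0] by simp
          then have "real ((i choose Suc j) * ((n-i) choose (k - Suc j))) * b j / real (n choose k)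
              \<le> real ((i choose j) * ((n-i) choose (k-j))) * b (Suc j) / real (n choose k)"
            using c0 by (simp add: divide_right_mono)
          then show ?thesis unfolding hdef using True by (simp add: algebra_simps)
        qed
        have "h (Suc j) * b l * b j = (h (Suc j) * b j) * b l" by (simp add: algebra_simps)
        also have "\<dots> \<le> (b (Suc j) * h j) * b l" using st b0 by (rule mult_right_mono)
        also have "\<dots> = b (Suc j) * (h j * b l)" by (simp add: algebra_simps)
        also have "\<dots> \<le> b (Suc j) * (b j * h l)" using step(3) b0 by (rule mult_left_mono)
        also have "\<dots> = b (Suc j) * h l * b j" by (simp add: algebra_simps)
        finally show ?thesis using bpos[of j] True by simp
      qed
    qed
  qed
  then show ?thesis unfolding h_def b_def p_def .
qed



lemma prob_fin:
  assumes "set_pmf M \<subseteq> K" "finite K"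
  shows "measure_pmf.prob M S = sum (pmf M) (S \<inter> K)"
proof -
  have "measure_pmf.prob M S = measure_pmf.prob M (S \<inter> set_pmf M)" by (rule measure_Int_set_pmf[symmetric])
  also have "S \<inter> set_pmf M = (S \<inter> K) \<inter> set_pmf M" using assms(1) by auto
  also have "measure_pmf.prob M \<dots> = measure_pmf.prob M (S \<inter> K)" by (rule measure_Int_set_pmf)
  also have "\<dots> = sum (pmf M) (S \<inter> K)" using assms(2) by (simp add: measure_measure_pmf_finite)
  finally show ?thesis .
qed

lemma cond_sum:
  fixes f :: "'a \<Rightarrow> real"
  assumes "set_pmf M \<subseteq> K" "finite K" "set_pmf M \<inter> A \<noteq> {}"
  shows "measure_pmf.expectation (cond_pmf M A) f = (\<Sum>x\<in>A \<inter> K. f x * pmf M x) / (\<Sum>x\<in>A \<inter> K. pmf M x)"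
proof -
  have "measure_pmf.expectation (cond_pmf M A) f = (\<Sum>x\<in>K. f x * pmf (cond_pmf M A) x)"
    by (rule integral_measure_pmf_real) (use assms in auto)
  also have "\<dots> = (\<Sum>x\<in>K. if x \<in> A then f x * pmf M x / measure_pmf.prob M A else 0)"
    by (intro sum.cong refl) (simp add: pmf_cond[OF assms(3)])
  also have "\<dots> = (\<Sum>x\<in>A \<inter> K. f x * pmf M x / measure_pmf.prob M A)"
    by (simp only: Int_commute[of A K] sum.inter_restrict[OF assms(2)])
  also have "\<dots> = (\<Sum>x\<in>A \<inter> K. f x * pmf M x) / measure_pmf.prob M A"
    by (simp add: sum_divide_distrib)
  also have "measure_pmf.prob M A = (\<Sum>x\<in>A \<inter> K. pmf M x)" by (rule prob_fin[OF assms(1,2)])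
  finally show ?thesis .
qed

lemma cond_prob:
  assumes "set_pmf M \<subseteq> K" "finite K" "set_pmf M \<inter> A \<noteq> {}"
  shows "measure_pmf.prob (cond_pmf M A) T = (\<Sum>x\<in>A \<inter> K. (if x \<in> T then 1 else 0) * pmf M x) / (\<Sum>x\<in>A \<inter> K. pmf M x)"
proof -
  have e: "(\<lambda>x. if x \<in> T then 1 else 0 :: real) = indicator T" by (auto simp: indicator_def)
  have "measure_pmf.prob (cond_pmf M A) T = measure_pmf.expectation (cond_pmf M A) (\<lambda>x. if x \<in> T then 1 else 0)"
    unfolding e by simp
  also have "\<dots> = (\<Sum>x\<in>A \<inter> K. (if x \<in> T then 1 else 0) * pmf M x) / (\<Sum>x\<in>A \<inter> K. pmf M x)"
    by (rule cond_sum[OF assms])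
  finally show ?thesis .
qed

lemma aux_ring: "(c::real) * s = K * d \<Longrightarrow> c * (p * pj) * Q * s = K * p * (d * pj * Q)"
proof -
  assume e: "c * s = K * d"
  have "c * (p * pj) * Q * s = (c * s) * (p * pj * Q)" by (simp only: mult_ac)
  also have "\<dots> = (K * d) * (p * pj * Q)" by (simp only: e)
  also have "\<dots> = K * p * (d * pj * Q)" by (simp only: mult_ac)
  finally show ?thesis .
qed

lemma hyp_sum:
  assumes "1 \<le> k" "1 \<le> i"
  shows "(\<Sum>j\<le>k. j * ((i choose j) * (N choose (k-j)))) = i * ((i - 1 + N) choose (k - 1))"
proof -
  obtain k' where k: "k = Suc k'" using assms by (cases k) auto
  have "(\<Sum>j\<le>k. j * ((i choose j) * (N choose (k-j)))) = (\<Sum>j\<le>k'. Suc j * ((i choose Suc j) * (N choose (k'-j))))"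
    unfolding k by (subst sum.atMost_Suc_shift) simp
  also have "\<dots> = (\<Sum>j\<le>k'. i * (((i-1) choose j) * (N choose (k'-j))))"
  proof (intro sum.cong refl)
    fix j
    have e: "Suc j * (i choose Suc j) = i * ((i-1) choose j)" using times_binomial_minus1_eq[of "Suc j" i] by simp
    show "Suc j * ((i choose Suc j) * (N choose (k'-j))) = i * (((i-1) choose j) * (N choose (k'-j)))"
      by (simp only: mult.assoc[symmetric] e)
  qed
  also have "\<dots> = i * ((i - 1 + N) choose k')" by (simp add: sum_distrib_left[symmetric] vandermonde)
  finally show ?thesis using k by simp
qed

lemma bin_sum:
  fixes p :: real
  assumes "1 \<le> k"
  shows "(\<Sum>j\<le>k. (real (k choose j) * p ^ j * (1 - p) ^ (k - j)) * real j) = real k * p"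
proof -
  obtain k' where k: "k = Suc k'" using assms by (cases k) auto
  have "(\<Sum>j\<le>k. (real (k choose j) * p ^ j * (1 - p) ^ (k - j)) * real j)
     = (\<Sum>j\<le>k'. (real (Suc k' choose Suc j) * p ^ Suc j * (1 - p) ^ (k' - j)) * real (Suc j))"
    unfolding k by (subst sum.atMost_Suc_shift) simp
  also have "\<dots> = (\<Sum>j\<le>k'. real (Suc k') * p * (real (k' choose j) * p ^ j * (1 - p) ^ (k' - j)))"
  proof (intro sum.cong refl)
    fix j
    have "real (Suc k' choose Suc j) * real (Suc j) = real (Suc k') * real (k' choose j)"
    proof -
      have "(Suc k' choose Suc j) * Suc j = Suc k' * (k' choose j)" using Suc_times_binomial[of j k'] by (simp only: mult.commute)
      then show ?thesis by (simp only: of_nat_mult[symmetric])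
    qed
    then show "(real (Suc k' choose Suc j) * p ^ Suc j * (1 - p) ^ (k' - j)) * real (Suc j)
       = real (Suc k') * p * (real (k' choose j) * p ^ j * (1 - p) ^ (k' - j))"
      unfolding power_Suc by (rule aux_ring)
  qed
  also have "\<dots> = real (Suc k') * p * (p + (1 - p)) ^ k'"
    using binomial_ring[of p "1 - p" k', symmetric] by (simp only: sum_distrib_left[symmetric])
  finally show ?thesis using k by simp
qed


lemma frac_cmp: "(c::real) > 0 \<Longrightarrow> e > 0 \<Longrightarrow> a * e \<le> d * c \<Longrightarrow> a / c \<le> d / e"
  by (simp add: field_simps)

theorem lemma6:
  fixes n i k :: nat
  assumes "1 \<le> k" and "k \<le> n" and "1 \<le> i" and "i \<le> n"
  defines "H \<equiv> hyp_pmf n i k"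
      and "X \<equiv> binomial_pmf k (real i / real n)"
      and "A \<equiv> {x::nat. real x \<ge> real i * real k / real n}"
  shows "st_le (cond_pmf H A) (cond_pmf X A) \<and>
         measure_pmf.expectation (cond_pmf H {x. real x \<ge> measure_pmf.expectation H real}) real
         \<le> measure_pmf.expectation (cond_pmf X {x. real x \<ge> measure_pmf.expectation X real}) real"
proof -
  have n0: "0 < n" using assms by simp
  define p where "p = real i / real n"
  have p01: "0 \<le> p" "p \<le> 1" "0 < p" unfolding p_def using assms n0 by auto
  define K where "K = {..k}"
  have finK: "finite K" unfolding K_def by simp
  have Amem: "x \<in> A \<longleftrightarrow> i * k \<le> x * n" for x
  proof -
    have "x \<in> A \<longleftrightarrow> real i * real k \<le> real x * real n" unfolding A_def using n0 by (simp add: pos_divide_le_eq)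
    also have "\<dots> \<longleftrightarrow> i * k \<le> x * n" by (metis of_nat_le_iff of_nat_mult)
    finally show ?thesis .
  qed
  have hpmf: "pmf H x = (if x \<le> k then real ((i choose x) * ((n-i) choose (k-x))) / real (n choose k) else 0)" for x
    unfolding H_def using pmf_hyp[OF assms(4,2)] by simp
  have bpmf: "pmf X x = real (k choose x) * p^x * (1-p)^(k-x)" for x
    unfolding X_def p_def[symmetric] using p01 by simp
  have setH: "set_pmf H \<subseteq> K"
  proof
    fix x assume "x \<in> set_pmf H"
    then have "pmf H x \<noteq> 0" by (simp add: set_pmf_iff)
    then show "x \<in> K" unfolding K_def using hpmf[of x] by (auto split: if_splits)
  qed
  have setX: "set_pmf X \<subseteq> K"
    unfolding X_def p_def[symmetric] K_def using set_pmf_binomial_eq[OF p01(1,2), of k] by auto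
  define m0 where "m0 = min i k"
  have "pmf H m0 > 0"
  proof -
    have "m0 \<le> k" "m0 \<le> i" "k - m0 \<le> n - i" unfolding m0_def using assms by auto
    then show ?thesis unfolding hpmf using assms by simp
  qed
  then have m0H: "m0 \<in> set_pmf H" by (simp add: set_pmf_iff)
  have m0A: "m0 \<in> A" unfolding Amem m0_def using assms by (auto simp: min_def mult.commute mult_le_mono)
  have "pmf X k > 0" unfolding bpmf using p01 by simp
  then have kX: "k \<in> set_pmf X" by (simp add: set_pmf_iff)
  have kA: "k \<in> A" unfolding Amem using assms by (simp add: mult.commute)
  have neH: "set_pmf H \<inter> A \<noteq> {}" using m0H m0A by blast
  have neX: "set_pmf X \<inter> A \<noteq> {}" using kX kA by blast
  have lr: "\<And>l j. l \<in> A \<inter> K \<Longrightarrow> j \<in> A \<inter> K \<Longrightarrow> l \<le> j \<Longrightarrow> pmf H j * pmf X l \<le> pmf X j * pmf H l"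
    unfolding H_def X_def using lr_pair assms Amem by blast
  have posH: "(\<Sum>x\<in>A \<inter> K. pmf H x) > 0"
    using prob_fin[OF setH finK, of A] measure_pmf_posI[OF m0H m0A] by simp
  have posX: "(\<Sum>x\<in>A \<inter> K. pmf X x) > 0"
    using prob_fin[OF setX finK, of A] measure_pmf_posI[OF kX kA] by simp
  have finAK: "finite (A \<inter> K)" using finK by simp
  have part1: "st_le (cond_pmf H A) (cond_pmf X A)"
    unfolding st_le_def
  proof
    fix t :: real
    let ?T = "{x. real x \<ge> t}"
    let ?phi = "\<lambda>x::nat. if x \<in> ?T then 1 else (0::real)"
    have mono: "?phi x \<le> ?phi y" if "x \<le> y" for x y using that by auto
    have "(\<Sum>j\<in>A \<inter> K. ?phi j * pmf H j) * (\<Sum>l\<in>A \<inter> K. pmf X l)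
        \<le> (\<Sum>j\<in>A \<inter> K. ?phi j * pmf X j) * (\<Sum>l\<in>A \<inter> K. pmf H l)"
      by (rule kernel[OF finAK lr mono])
    then show "measure_pmf.prob (cond_pmf H A) ?T \<le> measure_pmf.prob (cond_pmf X A) ?T"
      unfolding cond_prob[OF setH finK neH] cond_prob[OF setX finK neX]
      by (rule frac_cmp[OF posH posX])
  qed
  have EH: "measure_pmf.expectation H real = real i * real k / real n"
  proof -
    have "measure_pmf.expectation H real = (\<Sum>x\<in>K. real x * pmf H x)"
      by (rule integral_measure_pmf_real) (use setH finK in auto)
    also have "\<dots> = (\<Sum>x\<le>k. real (x * ((i choose x) * ((n-i) choose (k-x))))) / real (n choose k)"
      unfolding K_def hpmf by (simp add: sum_divide_distrib)
    also have "\<dots> = real (i * ((i - 1 + (n - i)) choose (k - 1))) / real (n choose k)"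
      by (simp only: of_nat_sum[symmetric] hyp_sum[OF assms(1,3)])
    also have "i - 1 + (n - i) = n - 1" using assms by simp
    also have "real (i * ((n - 1) choose (k - 1))) / real (n choose k) = real i * real k / real n"
    proof -
      have e: "k * (n choose k) = n * ((n - 1) choose (k - 1))" using times_binomial_minus1_eq[of k n] assms by simp
      then have e': "real k * real (n choose k) = real n * real ((n - 1) choose (k - 1))" by (metis of_nat_mult)
      have c0: "real (n choose k) > 0" using assms by simp
      show ?thesis using c0 n0 e' by (simp add: field_simps)
    qed
    finally show ?thesis .
  qed
  have EX: "measure_pmf.expectation X real = real i * real k / real n"
  proof -
    have "measure_pmf.expectation X real = (\<Sum>j\<le>k. (real (k choose j) * p ^ j * (1 - p) ^ (k - j)) * real j)"
      unfolding X_def p_def[symmetric] using p01 by (simp add: expectation_binomial_pmf')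
    also have "\<dots> = real k * p" by (rule bin_sum[OF assms(1)])
    finally show ?thesis unfolding p_def by simp
  qed
  have part2: "measure_pmf.expectation (cond_pmf H A) real \<le> measure_pmf.expectation (cond_pmf X A) real"
  proof -
    have "(\<Sum>j\<in>A \<inter> K. real j * pmf H j) * (\<Sum>l\<in>A \<inter> K. pmf X l)
        \<le> (\<Sum>j\<in>A \<inter> K. real j * pmf X j) * (\<Sum>l\<in>A \<inter> K. pmf H l)"
      by (rule kernel[OF finAK lr]) auto
    then show ?thesis
      unfolding cond_sum[OF setH finK neH] cond_sum[OF setX finK neX]
      by (rule frac_cmp[OF posH posX])
  qed
  show ?thesis using part1 part2 unfolding EH EX A_def by simp
qed

end
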